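(* Let $r\ge2$ and $k\ge3$ be integers and let $\widehat{F}_k$ be any $r$-coloring of $K_k$. Let $G$ be an $(r,\widehat{F}_k)$-extremal graph which is not a complete multipartite graph. For any vertices $u,v,w$ of $G$ such that $uv\notin E(G)$, $uw\notin E(G)$ and $vw\in E(G)$, the graph obtained from $G$ by deleting the edge $vw$ is still $(r,\widehat{F}_k)$-extremal.
   Context: An $r$-coloring of a graph assigns colors from $\{1,\dots,r\}$ to edges (not necessarily properly). A copy of $\widehat{F}_k$ in a colored graph is a set of $k$ pairwise adjacent vertices admitting a bijection to $V(K_k)$ under which two edges have equal colors iff their images have equal colors in $\widehat{F}_k$; a coloring is $\widehat{F}_k$-free if it has no copy. $c_{r,\widehat{F}_k}(G)$ is the number of $\widehat{F}_k$-free $r$-colorings of $E(G)$, $c_{r,\widehat{F}_k}(n)$ its maximum over $n$-vertex graphs, and an $n$-vertex graph $G$ is $(r,\widehat{F}_k)$-extremal if $c_{r,\widehat{F}_k}(G)=c_{r,\widehat{F}_k}(n)$. *)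

theory Defs
  imports Main "HOL-Library.FuncSet" "HOL-Library.Disjoint_Sets"
begin

definition all_edges :: "nat set \<Rightarrow> nat set set" where
  "all_edges V = {e. e \<subseteq> V \<and> card e = 2}"

definition graph_on :: "nat \<Rightarrow> nat set set \<Rightarrow> bool" where
  "graph_on n E \<longleftrightarrow> E \<subseteq> all_edges {0..<n}"

definition pattern_coloring :: "nat \<Rightarrow> nat \<Rightarrow> (nat set \<Rightarrow> nat) \<Rightarrow> bool" where
  "pattern_coloring r k \<phi> \<longleftrightarrow> (\<forall>e\<in>all_edges {0..<k}. \<phi> e \<in> {1..r})"

definition is_copy :: "nat set set \<Rightarrow> (nat set \<Rightarrow> nat) \<Rightarrow> nat \<Rightarrow> (nat set \<Rightarrow> nat) \<Rightarrow> nat set \<Rightarrow> bool" where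
  "is_copy E c k \<phi> S \<longleftrightarrow> card S = k \<and> all_edges S \<subseteq> E \<and>
     (\<exists>f. bij_betw f S {0..<k} \<and>
        (\<forall>e1\<in>all_edges S. \<forall>e2\<in>all_edges S. c e1 = c e2 \<longleftrightarrow> \<phi> (f ` e1) = \<phi> (f ` e2)))"

definition free_colorings :: "nat set set \<Rightarrow> nat \<Rightarrow> nat \<Rightarrow> (nat set \<Rightarrow> nat) \<Rightarrow> (nat set \<Rightarrow> nat) set" where
  "free_colorings E r k \<phi> = {c \<in> E \<rightarrow>\<^sub>E {1..r}. \<not> (\<exists>S. is_copy E c k \<phi> S)}"

definition num_free :: "nat set set \<Rightarrow> nat \<Rightarrow> nat \<Rightarrow> (nat set \<Rightarrow> nat) \<Rightarrow> nat" where
  "num_free E r k \<phi> = card (free_colorings E r k \<phi>)"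

definition max_free :: "nat \<Rightarrow> nat \<Rightarrow> (nat set \<Rightarrow> nat) \<Rightarrow> nat \<Rightarrow> nat" where
  "max_free r k \<phi> n = Max {num_free E r k \<phi> | E. graph_on n E}"

definition extremal :: "nat \<Rightarrow> nat \<Rightarrow> (nat set \<Rightarrow> nat) \<Rightarrow> nat \<Rightarrow> nat set set \<Rightarrow> bool" where
  "extremal r k \<phi> n E \<longleftrightarrow> graph_on n E \<and> num_free E r k \<phi> = max_free r k \<phi> n"

definition complete_multipartite :: "nat \<Rightarrow> nat set set \<Rightarrow> bool" where
  "complete_multipartite n E \<longleftrightarrow> (\<exists>P. partition_on {0..<n} P \<and>
     (\<forall>u\<in>{0..<n}. \<forall>v\<in>{0..<n}. u \<noteq> v \<longrightarrow>
        ({u, v} \<in> E \<longleftrightarrow> \<not> (\<exists>X\<in>P. u \<in> X \<and> v \<in> X))))"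

end

theory Submission
  imports Defs
begin

definition sw :: "nat \<Rightarrow> nat \<Rightarrow> nat \<Rightarrow> nat" where
  "sw x y z = (if z = x then y else if z = y then x else z)"

definition extc :: "nat \<Rightarrow> nat \<Rightarrow> (nat set \<Rightarrow> nat) \<Rightarrow> nat set set \<Rightarrow> nat set set \<Rightarrow> (nat set \<Rightarrow> nat) \<Rightarrow> (nat set \<Rightarrow> nat) set" where
  "extc r k \<phi> H X \<psi> = {\<alpha> \<in> X \<rightarrow>\<^sub>E {1..r}. (\<lambda>e. if e \<in> H then \<psi> e else \<alpha> e) \<in> free_colorings (H \<union> X) r k \<phi>}"

lemma sw_inv[simp]: "sw x y (sw x y z) = z" by (simp add: sw_def)
lemma inj_sw: "inj (sw x y)" by (metis injI sw_inv)
lemma sw_img_inv[simp]: "sw x y ` (sw x y ` e) = e" by (simp add: image_image)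
lemma sw_img_img[simp]: "(`) (sw x y) ` ((`) (sw x y) ` A) = A" by (simp add: image_image)
lemma sw_fix: "x \<notin> e \<Longrightarrow> y \<notin> e \<Longrightarrow> sw x y ` e = e" by (force simp: sw_def)

lemma card2_eq: "card e = 2 \<Longrightarrow> a \<in> e \<Longrightarrow> b \<in> e \<Longrightarrow> a \<noteq> b \<Longrightarrow> e = {a, b}"
proof -
  assume c: "card e = 2" and "a \<in> e" "b \<in> e" "a \<noteq> b"
  hence "{a,b} \<subseteq> e" "card {a,b} = 2" "finite e" using card.infinite by fastforce+
  thus ?thesis using c by (metis card_subset_eq)
qed

lemma finite_all_edges: "finite (all_edges {0..<n})"
  by (rule finite_subset[of _ "Pow {0..<n}"]) (auto simp: all_edges_def)

lemma graph_finite: "graph_on n E \<Longrightarrow> finite E"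
  using finite_all_edges finite_subset graph_on_def by blast

lemma num_free_le: "graph_on n E \<Longrightarrow> num_free E r k \<phi> \<le> max_free r k \<phi> n"
proof -
  assume g: "graph_on n E"
  have eq: "{num_free E r k \<phi> |E. graph_on n E} = (\<lambda>E. num_free E r k \<phi>) ` Pow (all_edges {0..<n})"
    by (auto simp: graph_on_def)
  show ?thesis unfolding max_free_def eq
    by (rule Max_ge) (use g finite_all_edges in \<open>auto simp: graph_on_def\<close>)
qed

lemma sw_all_edges: "x < n \<Longrightarrow> y < n \<Longrightarrow> e \<in> all_edges {0..<n} \<Longrightarrow> sw x y ` e \<in> all_edges {0..<n}"
proof -
  assume a: "x < n" "y < n" "e \<in> all_edges {0..<n}"
  have "sw x y ` e \<subseteq> {0..<n}" using a unfolding all_edges_def by (auto simp: sw_def)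
  moreover have "card (sw x y ` e) = 2" using a unfolding all_edges_def
    by (simp add: card_image inj_on_subset[OF inj_sw])
  ultimately show ?thesis by (simp add: all_edges_def)
qed

lemma all_edges_img: "all_edges (sw x y ` S) = (`) (sw x y) ` all_edges S"
proof
  show "all_edges (sw x y ` S) \<subseteq> (`) (sw x y) ` all_edges S"
  proof
    fix e assume e: "e \<in> all_edges (sw x y ` S)"
    have "sw x y ` e \<in> all_edges S" using e unfolding all_edges_def
      by (auto simp: card_image inj_on_subset[OF inj_sw])
    thus "e \<in> (`) (sw x y) ` all_edges S" by (metis image_eqI sw_img_inv)
  qed
  show "(`) (sw x y) ` all_edges S \<subseteq> all_edges (sw x y ` S)"
    unfolding all_edges_def by (auto simp: card_image inj_on_subset[OF inj_sw])
qed

lemma copy_local: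
  assumes "is_copy E c k \<phi> S" "all_edges S \<subseteq> E'" "\<forall>e\<in>all_edges S. c' e = c e"
  shows "is_copy E' c' k \<phi> S"
  using assms unfolding is_copy_def by auto

lemma copy_relabel:
  assumes "is_copy E c k \<phi> S" "\<forall>e\<in>all_edges S. c' (sw x y ` e) = c e"
  shows "is_copy ((`) (sw x y) ` E) c' k \<phi> (sw x y ` S)"
proof -
  obtain f where cs: "card S = k" "all_edges S \<subseteq> E" and f: "bij_betw f S {0..<k}"
    and col: "\<forall>e1\<in>all_edges S. \<forall>e2\<in>all_edges S. c e1 = c e2 \<longleftrightarrow> \<phi> (f ` e1) = \<phi> (f ` e2)"
    using assms(1) unfolding is_copy_def by blast
  have b: "bij_betw (sw x y) (sw x y ` S) S"
    by (metis bij_betw_imageI inj_on_subset[OF inj_sw] subset_UNIV sw_img_inv)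
  have bf: "bij_betw (f \<circ> sw x y) (sw x y ` S) {0..<k}" using bij_betw_trans[OF b f] .
  show ?thesis unfolding is_copy_def all_edges_img
  proof (intro conjI exI[of _ "f \<circ> sw x y"])
    show "card (sw x y ` S) = k" using cs by (simp add: card_image inj_on_subset[OF inj_sw])
    show "(`) (sw x y) ` all_edges S \<subseteq> (`) (sw x y) ` E" using cs by auto
    show "bij_betw (f \<circ> sw x y) (sw x y ` S) {0..<k}" by (rule bf)
    show "\<forall>e1\<in>(`) (sw x y) ` all_edges S. \<forall>e2\<in>(`) (sw x y) ` all_edges S.
       (c' e1 = c' e2) = (\<phi> ((f \<circ> sw x y) ` e1) = \<phi> ((f \<circ> sw x y) ` e2))"
    proof (intro ballI)
      fix e1 e2 assume "e1 \<in> (`) (sw x y) ` all_edges S" "e2 \<in> (`) (sw x y) ` all_edges S"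
      then obtain d1 d2 where d: "d1 \<in> all_edges S" "d2 \<in> all_edges S" "e1 = sw x y ` d1" "e2 = sw x y ` d2" by blast
      have "(f \<circ> sw x y) ` e1 = f ` d1" "(f \<circ> sw x y) ` e2 = f ` d2"
        using d by (simp_all add: image_image)
      thus "(c' e1 = c' e2) = (\<phi> ((f \<circ> sw x y) ` e1) = \<phi> ((f \<circ> sw x y) ` e2))"
        using col assms(2) d by simp
    qed
  qed
qed

lemma free_relabel:
  assumes "c \<in> free_colorings F r k \<phi>"
  shows "(\<lambda>e. if e \<in> (`) (sw x y) ` F then c (sw x y ` e) else undefined) \<in> free_colorings ((`) (sw x y) ` F) r k \<phi>"
    (is "?c' \<in> _")
proof -
  have pi: "c \<in> F \<rightarrow>\<^sub>E {1..r}" and nc: "\<not> (\<exists>S. is_copy F c k \<phi> S)"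
    using assms unfolding free_colorings_def by auto
  have "?c' \<in> (`) (sw x y) ` F \<rightarrow>\<^sub>E {1..r}"
    using pi by (auto simp: PiE_iff extensional_def)
  moreover have "\<not> (\<exists>S. is_copy ((`) (sw x y) ` F) ?c' k \<phi> S)"
  proof
    assume "\<exists>S. is_copy ((`) (sw x y) ` F) ?c' k \<phi> S"
    then obtain S where S: "is_copy ((`) (sw x y) ` F) ?c' k \<phi> S" by blast
    have "all_edges S \<subseteq> (`) (sw x y) ` F" using S unfolding is_copy_def by blast
    hence "\<forall>e\<in>all_edges S. c (sw x y ` e) = ?c' e" by auto
    from copy_relabel[OF S this] have "is_copy F c k \<phi> (sw x y ` S)" by simp
    thus False using nc by blast
  qed
  ultimately show ?thesis unfolding free_colorings_def by blast
qed

lemma extc_finite: "finite X \<Longrightarrow> finite (extc r k \<phi> H X \<psi>)"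
  unfolding extc_def by (rule finite_subset[OF _ finite_PiE[of X "\<lambda>_. {1..r}"]]) auto

lemma free_finite: "finite X \<Longrightarrow> finite (free_colorings X r k \<phi>)"
  unfolding free_colorings_def by (rule finite_subset[OF _ finite_PiE[of X "\<lambda>_. {1..r}"]]) auto

lemma extc_relabel_le:
  assumes H: "\<forall>e\<in>H. x \<notin> e \<and> y \<notin> e" and fin: "finite X"
  shows "card (extc r k \<phi> H X \<psi>) \<le> card (extc r k \<phi> H ((`) (sw x y) ` X) \<psi>)"
proof -
  let ?s = "(`) (sw x y)"
  define g where "g \<alpha> = (\<lambda>e. if e \<in> ?s ` X then \<alpha> (sw x y ` e) else undefined)" for \<alpha> :: "nat set \<Rightarrow> nat"
  have Hfix: "\<And>e. e \<in> H \<Longrightarrow> sw x y ` e = e" using H sw_fix by blast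
  have sH: "?s ` H = H" using Hfix by force
  have inj: "inj_on g (extc r k \<phi> H X \<psi>)"
  proof (rule inj_onI)
    fix a b assume a: "a \<in> extc r k \<phi> H X \<psi>" and b: "b \<in> extc r k \<phi> H X \<psi>" and gab: "g a = g b"
    have ae: "a \<in> X \<rightarrow>\<^sub>E {1..r}" "b \<in> X \<rightarrow>\<^sub>E {1..r}" using a b unfolding extc_def by auto
    show "a = b"
    proof (rule extensionalityI[of _ X])
      show "a \<in> extensional X" "b \<in> extensional X" using ae by (auto simp: PiE_iff)
      fix e assume "e \<in> X"
      hence "sw x y ` e \<in> ?s ` X" by blast
      hence "g a (sw x y ` e) = a e" "g b (sw x y ` e) = b e" unfolding g_def by auto
      thus "a e = b e" using gab by simp
    qed
  qed
  have img: "g ` extc r k \<phi> H X \<psi> \<subseteq> extc r k \<phi> H (?s ` X) \<psi>"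
  proof
    fix \<beta> assume "\<beta> \<in> g ` extc r k \<phi> H X \<psi>"
    then obtain \<alpha> where a: "\<alpha> \<in> extc r k \<phi> H X \<psi>" and be: "\<beta> = g \<alpha>" by blast
    have api: "\<alpha> \<in> X \<rightarrow>\<^sub>E {1..r}" and af: "(\<lambda>e. if e \<in> H then \<psi> e else \<alpha> e) \<in> free_colorings (H \<union> X) r k \<phi>"
      using a unfolding extc_def by auto
    let ?m = "(\<lambda>e. if e \<in> H then \<psi> e else \<alpha> e)"
    from free_relabel[OF af, of x y]
    have fr: "(\<lambda>e. if e \<in> ?s ` (H \<union> X) then ?m (sw x y ` e) else undefined) \<in> free_colorings (?s ` (H \<union> X)) r k \<phi>" .
    have sHX: "?s ` (H \<union> X) = H \<union> ?s ` X" using sH by (simp add: image_Un)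
    have eqf: "(\<lambda>e. if e \<in> ?s ` (H \<union> X) then ?m (sw x y ` e) else undefined) = (\<lambda>e. if e \<in> H then \<psi> e else \<beta> e)"
    proof
      fix e
      show "(if e \<in> ?s ` (H \<union> X) then ?m (sw x y ` e) else undefined) = (if e \<in> H then \<psi> e else \<beta> e)"
      proof (cases "e \<in> H")
        case True thus ?thesis using Hfix sHX by auto
      next
        case False
        have nH: "sw x y ` e \<notin> H" using False Hfix by (metis sw_img_inv)
        show ?thesis using False nH sHX unfolding be g_def by auto
      qed
    qed
    have "\<beta> \<in> ?s ` X \<rightarrow>\<^sub>E {1..r}" using api unfolding be g_def by (auto simp: PiE_iff extensional_def)
    thus "\<beta> \<in> extc r k \<phi> H (?s ` X) \<psi>" unfolding extc_def using fr eqf sHX by auto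
  qed
  show ?thesis
    by (rule card_inj_on_le[OF inj img]) (rule extc_finite, simp add: fin)
qed

lemma extc_relabel:
  assumes H: "\<forall>e\<in>H. x \<notin> e \<and> y \<notin> e" and fin: "finite X"
  shows "card (extc r k \<phi> H ((`) (sw x y) ` X) \<psi>) = card (extc r k \<phi> H X \<psi>)"
proof -
  have f2: "finite ((`) (sw x y) ` X)" using fin by simp
  show ?thesis
  using extc_relabel_le[OF H fin, where r=r and k=k and \<phi>=\<phi> and \<psi>=\<psi>]
    extc_relabel_le[OF H f2, where r=r and k=k and \<phi>=\<phi> and \<psi>=\<psi>]
  by simp
qed

lemma sub_free:
  assumes "c \<in> free_colorings F r k \<phi>" "F' \<subseteq> F"
  shows "restrict c F' \<in> free_colorings F' r k \<phi>"
proof -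
  have pi: "c \<in> F \<rightarrow>\<^sub>E {1..r}" and nc: "\<not> (\<exists>S. is_copy F c k \<phi> S)"
    using assms unfolding free_colorings_def by auto
  have "restrict c F' \<in> F' \<rightarrow>\<^sub>E {1..r}" using pi assms(2) by auto
  moreover have "\<not> (\<exists>S. is_copy F' (restrict c F') k \<phi> S)"
  proof
    assume "\<exists>S. is_copy F' (restrict c F') k \<phi> S"
    then obtain S where S: "is_copy F' (restrict c F') k \<phi> S" by blast
    have "all_edges S \<subseteq> F'" using S unfolding is_copy_def by blast
    hence "is_copy F c k \<phi> S" by (intro copy_local[OF S]) (use assms(2) in auto)
    thus False using nc by blast
  qed
  ultimately show ?thesis unfolding free_colorings_def by blast
qed

definition CCond :: "nat set set \<Rightarrow> nat set set \<Rightarrow> nat set set \<Rightarrow> nat set set \<Rightarrow> bool" where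
  "CCond H X1 X2 X3 \<longleftrightarrow> (\<forall>S. all_edges S \<subseteq> H \<union> X1 \<union> X2 \<union> X3 \<longrightarrow>
     all_edges S \<subseteq> H \<union> X1 \<or> all_edges S \<subseteq> H \<union> X2 \<or> all_edges S \<subseteq> H \<union> X3)"

lemma split_free:
  assumes cc: "CCond H X1 X2 X3" and pi: "c \<in> (H \<union> X1 \<union> X2 \<union> X3) \<rightarrow>\<^sub>E {1..r}"
    and f1: "restrict c (H \<union> X1) \<in> free_colorings (H \<union> X1) r k \<phi>"
    and f2: "restrict c (H \<union> X2) \<in> free_colorings (H \<union> X2) r k \<phi>"
    and f3: "restrict c (H \<union> X3) \<in> free_colorings (H \<union> X3) r k \<phi>"
  shows "c \<in> free_colorings (H \<union> X1 \<union> X2 \<union> X3) r k \<phi>"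
proof -
  have "\<not> (\<exists>S. is_copy (H \<union> X1 \<union> X2 \<union> X3) c k \<phi> S)"
  proof
    assume "\<exists>S. is_copy (H \<union> X1 \<union> X2 \<union> X3) c k \<phi> S"
    then obtain S where S: "is_copy (H \<union> X1 \<union> X2 \<union> X3) c k \<phi> S" by blast
    have "all_edges S \<subseteq> H \<union> X1 \<union> X2 \<union> X3" using S unfolding is_copy_def by blast
    hence "all_edges S \<subseteq> H \<union> X1 \<or> all_edges S \<subseteq> H \<union> X2 \<or> all_edges S \<subseteq> H \<union> X3"
      using cc unfolding CCond_def by blast
    moreover
    { fix Y assume Y: "all_edges S \<subseteq> H \<union> Y" "restrict c (H \<union> Y) \<in> free_colorings (H \<union> Y) r k \<phi>"
      have "is_copy (H \<union> Y) (restrict c (H \<union> Y)) k \<phi> S"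
        by (rule copy_local[OF S]) (use Y in auto)
      hence False using Y(2) unfolding free_colorings_def by blast }
    ultimately show False using f1 f2 f3 by blast
  qed
  thus ?thesis using pi unfolding free_colorings_def by blast
qed

lemma C3:
  assumes fin: "finite H" "finite X1" "finite X2" "finite X3"
    and disj: "H \<inter> X1 = {}" "H \<inter> X2 = {}" "H \<inter> X3 = {}" "X1 \<inter> X2 = {}" "X1 \<inter> X3 = {}" "X2 \<inter> X3 = {}"
    and cc: "CCond H X1 X2 X3"
  shows "num_free (H \<union> X1 \<union> X2 \<union> X3) r k \<phi> =
    (\<Sum>\<psi>\<in>free_colorings H r k \<phi>. card (extc r k \<phi> H X1 \<psi>) * card (extc r k \<phi> H X2 \<psi>) * card (extc r k \<phi> H X3 \<psi>))"
proof -
  let ?F = "H \<union> X1 \<union> X2 \<union> X3"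
  let ?T = "Sigma (free_colorings H r k \<phi>) (\<lambda>\<psi>. extc r k \<phi> H X1 \<psi> \<times> extc r k \<phi> H X2 \<psi> \<times> extc r k \<phi> H X3 \<psi>)"
  define g where "g c = (restrict c H, restrict c X1, restrict c X2, restrict c X3)" for c :: "nat set \<Rightarrow> nat"
  have merge: "(\<lambda>e. if e \<in> H then restrict c H e else restrict c Y e) = restrict c (H \<union> Y)" for c Y
    by auto
  have into: "g ` free_colorings ?F r k \<phi> \<subseteq> ?T"
  proof
    fix t assume "t \<in> g ` free_colorings ?F r k \<phi>"
    then obtain c where c: "c \<in> free_colorings ?F r k \<phi>" and t: "t = g c" by blast
    have pi: "c \<in> ?F \<rightarrow>\<^sub>E {1..r}" using c unfolding free_colorings_def by auto
    have e: "restrict c Y \<in> extc r k \<phi> H Y (restrict c H)" if "Y \<subseteq> ?F" for Y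
    proof -
      have "restrict c (H \<union> Y) \<in> free_colorings (H \<union> Y) r k \<phi>" using sub_free[OF c, of "H \<union> Y"] that by auto
      hence "(\<lambda>e. if e \<in> H then restrict c H e else restrict c Y e) \<in> free_colorings (H \<union> Y) r k \<phi>"
        by (simp only: merge)
      thus ?thesis unfolding extc_def using that pi by auto
    qed
    show "t \<in> ?T" unfolding t g_def using sub_free[OF c, of H] e by auto
  qed
  have inj: "inj_on g (free_colorings ?F r k \<phi>)"
  proof (rule inj_onI)
    fix a b assume a: "a \<in> free_colorings ?F r k \<phi>" and b: "b \<in> free_colorings ?F r k \<phi>" and gab: "g a = g b"
    have ae: "a \<in> extensional ?F" "b \<in> extensional ?F" using a b unfolding free_colorings_def by (auto simp: PiE_iff)
    show "a = b"
    proof (rule extensionalityI[OF ae])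
      fix e assume "e \<in> ?F"
      thus "a e = b e" using gab unfolding g_def by (auto simp: fun_eq_iff restrict_def) (metis+)
    qed
  qed
  have onto: "?T \<subseteq> g ` free_colorings ?F r k \<phi>"
  proof
    fix t assume t: "t \<in> ?T"
    then obtain \<psi> \<alpha> \<beta> \<gamma> where tt: "t = (\<psi>, \<alpha>, \<beta>, \<gamma>)" and p: "\<psi> \<in> free_colorings H r k \<phi>"
      and a: "\<alpha> \<in> extc r k \<phi> H X1 \<psi>" and b: "\<beta> \<in> extc r k \<phi> H X2 \<psi>" and c: "\<gamma> \<in> extc r k \<phi> H X3 \<psi>"
      by auto
    have pp: "\<psi> \<in> H \<rightarrow>\<^sub>E {1..r}" using p unfolding free_colorings_def by auto
    have pa: "\<alpha> \<in> X1 \<rightarrow>\<^sub>E {1..r}" "(\<lambda>e. if e \<in> H then \<psi> e else \<alpha> e) \<in> free_colorings (H \<union> X1) r k \<phi>"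
      using a unfolding extc_def by auto
    have pb: "\<beta> \<in> X2 \<rightarrow>\<^sub>E {1..r}" "(\<lambda>e. if e \<in> H then \<psi> e else \<beta> e) \<in> free_colorings (H \<union> X2) r k \<phi>"
      using b unfolding extc_def by auto
    have pc: "\<gamma> \<in> X3 \<rightarrow>\<^sub>E {1..r}" "(\<lambda>e. if e \<in> H then \<psi> e else \<gamma> e) \<in> free_colorings (H \<union> X3) r k \<phi>"
      using c unfolding extc_def by auto
    define cc where "cc = (\<lambda>e. if e \<in> H then \<psi> e else if e \<in> X1 then \<alpha> e else if e \<in> X2 then \<beta> e else \<gamma> e)"
    have ccpi: "cc \<in> ?F \<rightarrow>\<^sub>E {1..r}" using pp pa(1) pb(1) pc(1) unfolding cc_def by (auto simp: PiE_iff extensional_def)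
    have r1: "restrict cc (H \<union> X1) = (\<lambda>e. if e \<in> H then \<psi> e else \<alpha> e)"
      using pa(1) unfolding cc_def by (auto simp: fun_eq_iff PiE_iff extensional_def)
    have r2: "restrict cc (H \<union> X2) = (\<lambda>e. if e \<in> H then \<psi> e else \<beta> e)"
      using pb(1) disj unfolding cc_def by (auto simp: fun_eq_iff PiE_iff extensional_def)
    have r3: "restrict cc (H \<union> X3) = (\<lambda>e. if e \<in> H then \<psi> e else \<gamma> e)"
      using pc(1) disj unfolding cc_def by (auto simp: fun_eq_iff PiE_iff extensional_def)
    have ccf: "cc \<in> free_colorings ?F r k \<phi>"
      by (rule split_free[OF cc ccpi]) (simp_all only: r1 r2 r3 pa(2) pb(2) pc(2))
    have "g cc = t" unfolding tt g_def using pp pa(1) pb(1) pc(1) disj unfolding cc_def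
      by (auto simp: fun_eq_iff PiE_iff extensional_def)
    thus "t \<in> g ` free_colorings ?F r k \<phi>" using ccf by blast
  qed
  have bij: "bij_betw g (free_colorings ?F r k \<phi>) ?T"
    unfolding bij_betw_def using inj into onto by blast
  have "num_free ?F r k \<phi> = card ?T" unfolding num_free_def using bij_betw_same_card[OF bij] .
  also have "\<dots> = (\<Sum>\<psi>\<in>free_colorings H r k \<phi>. card (extc r k \<phi> H X1 \<psi> \<times> extc r k \<phi> H X2 \<psi> \<times> extc r k \<phi> H X3 \<psi>))"
    by (rule card_SigmaI) (auto intro!: free_finite extc_finite finite_cartesian_product simp: fin)
  also have "\<dots> = (\<Sum>\<psi>\<in>free_colorings H r k \<phi>. card (extc r k \<phi> H X1 \<psi>) * card (extc r k \<phi> H X2 \<psi>) * card (extc r k \<phi> H X3 \<psi>))"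
    by (simp add: card_cartesian_product mult.assoc)
  finally show ?thesis .
qed

lemma extc_empty: "\<psi> \<in> free_colorings H r k \<phi> \<Longrightarrow> card (extc r k \<phi> H {} \<psi>) = 1"
proof -
  assume p: "\<psi> \<in> free_colorings H r k \<phi>"
  have ex: "\<psi> \<in> extensional H" using p unfolding free_colorings_def by (auto simp: PiE_iff)
  have "(\<lambda>e. if e \<in> H then \<psi> e else undefined) = \<psi>" using ex by (auto simp: fun_eq_iff extensional_def)
  hence "extc r k \<phi> H {} \<psi> = {\<lambda>_. undefined}" unfolding extc_def using p by auto
  thus ?thesis by simp
qed

lemma pair_ae: "a \<in> S \<Longrightarrow> b \<in> S \<Longrightarrow> a \<noteq> b \<Longrightarrow> {a, b} \<in> all_edges S"
  by (simp add: all_edges_def)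

lemma ae_sub: "e \<in> all_edges S \<Longrightarrow> e \<subseteq> S"
  by (simp add: all_edges_def)

lemma CC3:
  assumes d: "p1 \<noteq> p2" "p1 \<noteq> p3" "p2 \<noteq> p3"
    and h: "\<forall>e\<in>H. p1 \<notin> e \<and> p2 \<notin> e \<and> p3 \<notin> e"
    and x1: "\<forall>e\<in>X1. p1 \<in> e \<and> p2 \<notin> e \<and> p3 \<notin> e"
    and x2: "\<forall>e\<in>X2. p2 \<in> e \<and> p1 \<notin> e \<and> p3 \<notin> e"
    and x3: "\<forall>e\<in>X3. p3 \<in> e \<and> p1 \<notin> e \<and> p2 \<notin> e"
  shows "CCond H X1 X2 X3"
  unfolding CCond_def
proof (intro allI impI)
  fix S assume A: "all_edges S \<subseteq> H \<union> X1 \<union> X2 \<union> X3"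
  have n12: "\<not> (p1 \<in> S \<and> p2 \<in> S)"
  proof
    assume "p1 \<in> S \<and> p2 \<in> S"
    hence m: "{p1, p2} \<in> H \<union> X1 \<union> X2 \<union> X3" using pair_ae[of p1 S p2] A d by blast
    have "{p1, p2} \<notin> H" using h by (metis insert_iff)
    moreover have "{p1, p2} \<notin> X1" using x1 by (metis insert_iff)
    moreover have "{p1, p2} \<notin> X2" using x2 by (metis insert_iff)
    moreover have "{p1, p2} \<notin> X3" using x3 by (metis insert_iff)
    ultimately show False using m by blast
  qed
  have n13: "\<not> (p1 \<in> S \<and> p3 \<in> S)"
  proof
    assume "p1 \<in> S \<and> p3 \<in> S"
    hence m: "{p1, p3} \<in> H \<union> X1 \<union> X2 \<union> X3" using pair_ae[of p1 S p3] A d by blast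
    have "{p1, p3} \<notin> H" using h by (metis insert_iff)
    moreover have "{p1, p3} \<notin> X1" using x1 by (metis insert_iff)
    moreover have "{p1, p3} \<notin> X2" using x2 by (metis insert_iff)
    moreover have "{p1, p3} \<notin> X3" using x3 by (metis insert_iff)
    ultimately show False using m by blast
  qed
  have n23: "\<not> (p2 \<in> S \<and> p3 \<in> S)"
  proof
    assume "p2 \<in> S \<and> p3 \<in> S"
    hence m: "{p2, p3} \<in> H \<union> X1 \<union> X2 \<union> X3" using pair_ae[of p2 S p3] A d by blast
    have "{p2, p3} \<notin> H" using h by (metis insert_iff)
    moreover have "{p2, p3} \<notin> X1" using x1 by (metis insert_iff)
    moreover have "{p2, p3} \<notin> X2" using x2 by (metis insert_iff)
    moreover have "{p2, p3} \<notin> X3" using x3 by (metis insert_iff)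
    ultimately show False using m by blast
  qed
  have sub: "\<And>e. e \<in> all_edges S \<Longrightarrow> e \<subseteq> S" by (rule ae_sub)
  show "all_edges S \<subseteq> H \<union> X1 \<or> all_edges S \<subseteq> H \<union> X2 \<or> all_edges S \<subseteq> H \<union> X3"
  proof (cases "p1 \<in> S")
    case True
    hence ns: "p2 \<notin> S" "p3 \<notin> S" using n12 n13 by auto
    have "all_edges S \<subseteq> H \<union> X1"
    proof
      fix e assume e: "e \<in> all_edges S"
      have es: "e \<subseteq> S" using sub[OF e] .
      have "e \<in> H \<union> X1 \<union> X2 \<union> X3" using A e by blast
      thus "e \<in> H \<union> X1" using es x2 x3 ns by blast
    qed
    thus ?thesis by blast
  next
    case False
    show ?thesis
    proof (cases "p2 \<in> S")
      case True
      hence ns: "p3 \<notin> S" using n23 by auto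
      have "all_edges S \<subseteq> H \<union> X2"
    proof
      fix e assume e: "e \<in> all_edges S"
      have es: "e \<subseteq> S" using sub[OF e] .
      have "e \<in> H \<union> X1 \<union> X2 \<union> X3" using A e by blast
      thus "e \<in> H \<union> X2" using es x1 x3 False ns by blast
    qed
      thus ?thesis by blast
    next
      case F2: False
      have "all_edges S \<subseteq> H \<union> X3"
    proof
      fix e assume e: "e \<in> all_edges S"
      have es: "e \<subseteq> S" using sub[OF e] .
      have "e \<in> H \<union> X1 \<union> X2 \<union> X3" using A e by blast
      thus "e \<in> H \<union> X3" using es x1 x2 False F2 by blast
    qed
      thus ?thesis by blast
    qed
  qed
qed

lemma CC2:
  assumes d: "p1 \<noteq> p2"
    and h: "\<forall>e\<in>H. p1 \<notin> e \<and> p2 \<notin> e"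
    and x1: "\<forall>e\<in>X1. p1 \<in> e \<and> p2 \<notin> e"
    and x2: "\<forall>e\<in>X2. p2 \<in> e \<and> p1 \<notin> e"
  shows "CCond H X1 X2 {}"
  unfolding CCond_def
proof (intro allI impI)
  fix S assume A: "all_edges S \<subseteq> H \<union> X1 \<union> X2 \<union> {}"
  have n12: "\<not> (p1 \<in> S \<and> p2 \<in> S)"
  proof
    assume "p1 \<in> S \<and> p2 \<in> S"
    hence m: "{p1, p2} \<in> H \<union> X1 \<union> X2" using pair_ae[of p1 S p2] A d by blast
    have "{p1, p2} \<notin> H" using h by (metis insert_iff)
    moreover have "{p1, p2} \<notin> X1" using x1 by (metis insert_iff)
    moreover have "{p1, p2} \<notin> X2" using x2 by (metis insert_iff)
    ultimately show False using m by blast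
  qed
  have sub: "\<And>e. e \<in> all_edges S \<Longrightarrow> e \<subseteq> S" by (rule ae_sub)
  show "all_edges S \<subseteq> H \<union> X1 \<or> all_edges S \<subseteq> H \<union> X2 \<or> all_edges S \<subseteq> H \<union> {}"
  proof (cases "p1 \<in> S")
    case True
    hence ns: "p2 \<notin> S" using n12 by auto
    have "all_edges S \<subseteq> H \<union> X1"
    proof
      fix e assume e: "e \<in> all_edges S"
      have es: "e \<subseteq> S" using sub[OF e] .
      have "e \<in> H \<union> X1 \<union> X2" using A e by blast
      thus "e \<in> H \<union> X1" using es x2 ns by blast
    qed
    thus ?thesis by blast
  next
    case False
    have "all_edges S \<subseteq> H \<union> X2"
    proof
      fix e assume e: "e \<in> all_edges S"
      have es: "e \<subseteq> S" using sub[OF e] .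
      have "e \<in> H \<union> X1 \<union> X2" using A e by blast
      thus "e \<in> H \<union> X2" using es x1 False by blast
    qed
    thus ?thesis by blast
  qed
qed

lemma C2:
  assumes fin: "finite H" "finite X1" "finite X2"
    and disj: "H \<inter> X1 = {}" "H \<inter> X2 = {}" "X1 \<inter> X2 = {}"
    and cc: "CCond H X1 X2 {}"
  shows "num_free (H \<union> X1 \<union> X2) r k \<phi> =
    (\<Sum>\<psi>\<in>free_colorings H r k \<phi>. card (extc r k \<phi> H X1 \<psi>) * card (extc r k \<phi> H X2 \<psi>))"
proof -
  have "num_free (H \<union> X1 \<union> X2 \<union> {}) r k \<phi> = (\<Sum>\<psi>\<in>free_colorings H r k \<phi>. card (extc r k \<phi> H X1 \<psi>) * card (extc r k \<phi> H X2 \<psi>) * card (extc r k \<phi> H {} \<psi>))"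
    by (rule C3) (use fin disj cc in auto)
  thus ?thesis by (simp add: extc_empty cong: sum.cong)
qed

lemma edge_card: "graph_on n E \<Longrightarrow> e \<in> E \<Longrightarrow> card e = 2 \<and> e \<subseteq> {0..<n}"
  unfolding graph_on_def all_edges_def by auto

lemma img_graph: "graph_on n E \<Longrightarrow> x < n \<Longrightarrow> y < n \<Longrightarrow> graph_on n ((`) (sw x y) ` E)"
  unfolding graph_on_def using sw_all_edges by blast

lemma mem_sw: "(p \<in> sw x y ` e) = (sw x y p \<in> e)"
  by (metis image_eqI imageE sw_inv)

lemma sw_edge_props:
  "p \<noteq> x \<Longrightarrow> p \<noteq> y \<Longrightarrow> (p \<in> sw x y ` e) = (p \<in> e)"
  "(x \<in> sw x y ` e) = (y \<in> e)"
  "(y \<in> sw x y ` e) = (x \<in> e)"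
  by (simp_all only: mem_sw) (simp_all add: sw_def)

lemma sq_arith:
  fixes a b :: "'i \<Rightarrow> nat"
  assumes fin: "finite A" and l1: "(\<Sum>i\<in>A. a i * a i) \<le> (\<Sum>i\<in>A. a i * b i)"
    and l2: "(\<Sum>i\<in>A. b i * b i) \<le> (\<Sum>i\<in>A. a i * b i)"
  shows "(\<Sum>i\<in>A. a i * a i) = (\<Sum>i\<in>A. a i * b i)"
proof -
  let ?A = "(\<Sum>i\<in>A. int (a i) * int (a i))" and ?B = "(\<Sum>i\<in>A. int (b i) * int (b i))"
    and ?C = "(\<Sum>i\<in>A. int (a i) * int (b i))"
  have "0 \<le> (\<Sum>i\<in>A. (int (a i) - int (b i)) * (int (a i) - int (b i)))"
    by (rule sum_nonneg) simp
  also have "\<dots> = ?A + ?B - 2 * ?C"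
    by (simp add: algebra_simps sum.distrib sum_subtractf sum_distrib_left)
  finally have "0 \<le> ?A + ?B - 2 * ?C" .
  moreover have "?A \<le> ?C" "?B \<le> ?C" using l1 l2 by (simp_all flip: of_nat_mult of_nat_sum)
  ultimately have "?A = ?C" by linarith
  thus ?thesis by (simp flip: of_nat_mult of_nat_sum)
qed

lemma cube_arith:
  fixes a c :: "'i \<Rightarrow> nat"
  assumes fin: "finite A" and l1: "(\<Sum>i\<in>A. a i * a i * a i) \<le> M"
    and l2: "(\<Sum>i\<in>A. a i * c i * c i) \<le> M" and eq: "(\<Sum>i\<in>A. a i * a i * c i) = M"
  shows "\<forall>i\<in>A. a i = 0 \<or> a i = c i"
proof -
  let ?A = "(\<Sum>i\<in>A. int (a i) * int (a i) * int (a i))" and ?B = "(\<Sum>i\<in>A. int (a i) * int (c i) * int (c i))"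
    and ?C = "(\<Sum>i\<in>A. int (a i) * int (a i) * int (c i))"
  have e: "(\<Sum>i\<in>A. int (a i) * ((int (a i) - int (c i)) * (int (a i) - int (c i)))) = ?A + ?B - 2 * ?C"
    by (simp add: algebra_simps sum.distrib sum_subtractf sum_distrib_left)
  have "?A \<le> int M" "?B \<le> int M" "?C = int M" using l1 l2 eq by (simp_all flip: of_nat_mult of_nat_sum)
  hence le: "(\<Sum>i\<in>A. int (a i) * ((int (a i) - int (c i)) * (int (a i) - int (c i)))) \<le> 0" using e by linarith
  have nn: "\<forall>i\<in>A. 0 \<le> int (a i) * ((int (a i) - int (c i)) * (int (a i) - int (c i)))" by simp
  have "\<forall>i\<in>A. int (a i) * ((int (a i) - int (c i)) * (int (a i) - int (c i))) = 0"
    using sum_nonneg_eq_0_iff[OF fin] nn le sum_nonneg[of A] by (metis (no_types, lifting) antisym)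
  thus ?thesis by auto
qed

lemma graph_on_Un: "graph_on n (A \<union> B) \<longleftrightarrow> graph_on n A \<and> graph_on n B"
  by (auto simp: graph_on_def)

lemma graph_on_sub: "graph_on n E \<Longrightarrow> A \<subseteq> E \<Longrightarrow> graph_on n A"
  by (auto simp: graph_on_def)

lemma L:
  assumes ex: "extremal r k \<phi> n E" and xy: "x < n" "y < n" "x \<noteq> y" "{x, y} \<notin> E"
  shows "extremal r k \<phi> n ({e\<in>E. x \<notin> e \<and> y \<notin> e} \<union> {e\<in>E. x \<in> e} \<union> (`) (sw x y) ` {e\<in>E. x \<in> e})"
proof -
  define F0 where "F0 = {e\<in>E. x \<notin> e \<and> y \<notin> e}"
  define F1 where "F1 = {e\<in>E. x \<in> e}"
  define F2 where "F2 = {e\<in>E. y \<in> e}"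
  let ?s = "(`) (sw x y)"
  have g: "graph_on n E" and M: "num_free E r k \<phi> = max_free r k \<phi> n" using ex unfolding extremal_def by auto
  have fE: "finite E" using graph_finite[OF g] .
  have fin: "finite F0" "finite F1" "finite F2" using fE unfolding F0_def F1_def F2_def by auto
  have nxy: "\<And>e. e \<in> E \<Longrightarrow> x \<in> e \<Longrightarrow> y \<in> e \<Longrightarrow> False"
  proof -
    fix e assume e: "e \<in> E" "x \<in> e" "y \<in> e"
    have "card e = 2" using edge_card[OF g e(1)] by simp
    hence "e = {x, y}" using card2_eq[OF _ e(2) e(3) xy(3)] by simp
    thus False using e(1) xy(4) by simp
  qed
  have h0: "\<forall>e\<in>F0. x \<notin> e \<and> y \<notin> e" unfolding F0_def by auto
  have a1: "\<forall>e\<in>F1. x \<in> e \<and> y \<notin> e" unfolding F1_def using nxy by auto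
  have a2: "\<forall>e\<in>F2. y \<in> e \<and> x \<notin> e" unfolding F2_def using nxy by auto
  have s1: "\<forall>e\<in>?s ` F1. y \<in> e \<and> x \<notin> e"
  proof
    fix e assume "e \<in> ?s ` F1"
    then obtain d where d: "d \<in> F1" "e = sw x y ` d" by blast
    show "y \<in> e \<and> x \<notin> e" using a1 d by (simp add: sw_edge_props)
  qed
  have s2: "\<forall>e\<in>?s ` F2. x \<in> e \<and> y \<notin> e"
  proof
    fix e assume "e \<in> ?s ` F2"
    then obtain d where d: "d \<in> F2" "e = sw x y ` d" by blast
    show "x \<in> e \<and> y \<notin> e" using a2 d by (simp add: sw_edge_props)
  qed
  have EE: "E = F0 \<union> F1 \<union> F2" unfolding F0_def F1_def F2_def by auto
  have c0: "num_free E r k \<phi> = (\<Sum>\<psi>\<in>free_colorings F0 r k \<phi>. card (extc r k \<phi> F0 F1 \<psi>) * card (extc r k \<phi> F0 F2 \<psi>))"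
    unfolding EE
  proof (rule C2)
    show "CCond F0 F1 F2 {}" by (rule CC2[OF xy(3) h0]) (use a1 a2 in auto)
  qed (use fin h0 a1 a2 in auto)
  have c1: "num_free (F0 \<union> F1 \<union> ?s ` F1) r k \<phi> = (\<Sum>\<psi>\<in>free_colorings F0 r k \<phi>. card (extc r k \<phi> F0 F1 \<psi>) * card (extc r k \<phi> F0 F1 \<psi>))"
  proof -
    have "num_free (F0 \<union> F1 \<union> ?s ` F1) r k \<phi> = (\<Sum>\<psi>\<in>free_colorings F0 r k \<phi>. card (extc r k \<phi> F0 F1 \<psi>) * card (extc r k \<phi> F0 (?s ` F1) \<psi>))"
    proof (rule C2)
      show "CCond F0 F1 (?s ` F1) {}" by (rule CC2[OF xy(3) h0]) (use a1 s1 in auto)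
    qed (use fin h0 s1 a1 in auto)
    thus ?thesis using extc_relabel[OF h0 fin(2)] by simp
  qed
  have c2: "num_free (F0 \<union> F2 \<union> ?s ` F2) r k \<phi> = (\<Sum>\<psi>\<in>free_colorings F0 r k \<phi>. card (extc r k \<phi> F0 F2 \<psi>) * card (extc r k \<phi> F0 F2 \<psi>))"
  proof -
    have "num_free (F0 \<union> F2 \<union> ?s ` F2) r k \<phi> = (\<Sum>\<psi>\<in>free_colorings F0 r k \<phi>. card (extc r k \<phi> F0 F2 \<psi>) * card (extc r k \<phi> F0 (?s ` F2) \<psi>))"
    proof (rule C2)
      have h0': "\<forall>e\<in>F0. y \<notin> e \<and> x \<notin> e" using h0 by auto
      show "CCond F0 F2 (?s ` F2) {}" by (rule CC2[OF xy(3)[symmetric] h0']) (use a2 s2 in auto)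
    qed (use fin h0 s2 a2 in auto)
    thus ?thesis using extc_relabel[OF h0 fin(3)] by simp
  qed
  have gE: "graph_on n (?s ` E)" using img_graph[OF g xy(1,2)] .
  have g1: "graph_on n (F0 \<union> F1 \<union> ?s ` F1)"
  proof -
    have "F0 \<union> F1 \<subseteq> E" unfolding F0_def F1_def by auto
    moreover have "?s ` F1 \<subseteq> ?s ` E" unfolding F1_def by auto
    ultimately show ?thesis using graph_on_sub[OF g] graph_on_sub[OF gE] by (simp add: graph_on_Un)
  qed
  have g2: "graph_on n (F0 \<union> F2 \<union> ?s ` F2)"
  proof -
    have "F0 \<union> F2 \<subseteq> E" unfolding F0_def F2_def by auto
    moreover have "?s ` F2 \<subseteq> ?s ` E" unfolding F2_def by auto
    ultimately show ?thesis using graph_on_sub[OF g] graph_on_sub[OF gE] by (simp add: graph_on_Un)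
  qed
  have eq: "num_free (F0 \<union> F1 \<union> ?s ` F1) r k \<phi> = num_free E r k \<phi>"
  proof -
    have "(\<Sum>\<psi>\<in>free_colorings F0 r k \<phi>. card (extc r k \<phi> F0 F1 \<psi>) * card (extc r k \<phi> F0 F1 \<psi>))
      = (\<Sum>\<psi>\<in>free_colorings F0 r k \<phi>. card (extc r k \<phi> F0 F1 \<psi>) * card (extc r k \<phi> F0 F2 \<psi>))"
    proof (rule sq_arith)
      show "finite (free_colorings F0 r k \<phi>)" using free_finite[OF fin(1)] .
      show "(\<Sum>\<psi>\<in>free_colorings F0 r k \<phi>. card (extc r k \<phi> F0 F1 \<psi>) * card (extc r k \<phi> F0 F1 \<psi>))
        \<le> (\<Sum>\<psi>\<in>free_colorings F0 r k \<phi>. card (extc r k \<phi> F0 F1 \<psi>) * card (extc r k \<phi> F0 F2 \<psi>))"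
        using num_free_le[OF g1, of r k \<phi>] unfolding c1 c0[symmetric] M .
      show "(\<Sum>\<psi>\<in>free_colorings F0 r k \<phi>. card (extc r k \<phi> F0 F2 \<psi>) * card (extc r k \<phi> F0 F2 \<psi>))
        \<le> (\<Sum>\<psi>\<in>free_colorings F0 r k \<phi>. card (extc r k \<phi> F0 F1 \<psi>) * card (extc r k \<phi> F0 F2 \<psi>))"
        using num_free_le[OF g2, of r k \<phi>] unfolding c2 c0[symmetric] M .
    qed
    thus ?thesis unfolding c0 c1 .
  qed
  show ?thesis unfolding extremal_def using g1 eq M unfolding F0_def F1_def by simp
qed

lemma C3v:
  assumes d: "p1 \<noteq> p2" "p1 \<noteq> p3" "p2 \<noteq> p3"
    and h: "\<forall>e\<in>H. p1 \<notin> e \<and> p2 \<notin> e \<and> p3 \<notin> e"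
    and x1: "\<forall>e\<in>X1. p1 \<in> e \<and> p2 \<notin> e \<and> p3 \<notin> e"
    and x2: "\<forall>e\<in>X2. p2 \<in> e \<and> p1 \<notin> e \<and> p3 \<notin> e"
    and x3: "\<forall>e\<in>X3. p3 \<in> e \<and> p1 \<notin> e \<and> p2 \<notin> e"
    and fin: "finite H" "finite X1" "finite X2" "finite X3"
  shows "num_free (H \<union> X1 \<union> X2 \<union> X3) r k \<phi> =
    (\<Sum>\<psi>\<in>free_colorings H r k \<phi>. card (extc r k \<phi> H X1 \<psi>) * card (extc r k \<phi> H X2 \<psi>) * card (extc r k \<phi> H X3 \<psi>))"
proof (rule C3[OF fin])
  show "CCond H X1 X2 X3" by (rule CC3[OF d h x1 x2 x3])
  show "H \<inter> X1 = {}" using h x1 by auto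
  show "H \<inter> X2 = {}" using h x2 by auto
  show "H \<inter> X3 = {}" using h x3 by auto
  show "X1 \<inter> X2 = {}" using x1 x2 by auto
  show "X1 \<inter> X3 = {}" using x1 x3 by auto
  show "X2 \<inter> X3 = {}" using x2 x3 by auto
qed

lemma edge_pair: "graph_on n E \<Longrightarrow> e \<in> E \<Longrightarrow> a \<in> e \<Longrightarrow> b \<in> e \<Longrightarrow> a \<noteq> b \<Longrightarrow> e = {a, b}"
proof -
  assume g: "graph_on n E" and e: "e \<in> E" and ab: "a \<in> e" "b \<in> e" "a \<noteq> b"
  have "card e = 2" using edge_card[OF g e] by simp
  thus ?thesis using card2_eq[OF _ ab] by simp
qed

theorem lemma2p10:
  fixes r k n :: nat and \<phi> :: "nat set \<Rightarrow> nat" and E :: "nat set set" and u v w :: nat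
  assumes "r \<ge> 2" and "k \<ge> 3"
    and "pattern_coloring r k \<phi>"
    and "extremal r k \<phi> n E"
    and "\<not> complete_multipartite n E"
    and "u < n" and "v < n" and "w < n"
    and "{u, v} \<notin> E" and "{u, w} \<notin> E" and "{v, w} \<in> E"
  shows "extremal r k \<phi> n (E - {{v, w}})"
proof -
  note ex = assms(4)
  have g: "graph_on n E" and M: "num_free E r k \<phi> = max_free r k \<phi> n" using ex unfolding extremal_def by auto
  have fE: "finite E" using graph_finite[OF g] .
  have vw: "v \<noteq> w" using edge_card[OF g assms(11)] by (metis card_1_singleton_iff insert_absorb2 numeral_One numeral_eq_iff semiring_norm(85) One_nat_def)
  have uv: "u \<noteq> v" using assms(10,11) by auto
  have uw: "u \<noteq> w" using assms(9,11) by (metis insert_commute)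
  have np: "\<And>e a b. e \<in> E \<Longrightarrow> a \<in> e \<Longrightarrow> b \<in> e \<Longrightarrow> a \<noteq> b \<Longrightarrow> e = {a, b}"
    using edge_pair[OF g] by blast
  define Hs where "Hs = {e\<in>E. u \<notin> e \<and> v \<notin> e \<and> w \<notin> e}"
  define U where "U = {e\<in>E. u \<in> e}"
  define V where "V = {e\<in>E. v \<in> e \<and> w \<notin> e}"
  define W where "W = {e\<in>E. w \<in> e \<and> v \<notin> e}"
  let ?\<sigma> = "(`) (sw u v)" and ?\<tau> = "(`) (sw u w)" and ?\<rho> = "(`) (sw v w)"
  have hH: "\<forall>e\<in>Hs. u \<notin> e \<and> v \<notin> e \<and> w \<notin> e" unfolding Hs_def by auto
  have hU: "\<forall>e\<in>U. u \<in> e \<and> v \<notin> e \<and> w \<notin> e"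
  proof
    fix e assume e: "e \<in> U"
    have "v \<notin> e" using e assms(9) np[of e u v] uv unfolding U_def by auto
    moreover have "w \<notin> e" using e assms(10) np[of e u w] uw unfolding U_def by auto
    ultimately show "u \<in> e \<and> v \<notin> e \<and> w \<notin> e" using e unfolding U_def by auto
  qed
  have hV: "\<forall>e\<in>V. v \<in> e \<and> u \<notin> e \<and> w \<notin> e"
  proof
    fix e assume e: "e \<in> V"
    have "u \<notin> e" using e assms(9) np[of e u v] uv unfolding V_def by auto
    thus "v \<in> e \<and> u \<notin> e \<and> w \<notin> e" using e unfolding V_def by auto
  qed
  have hW: "\<forall>e\<in>W. w \<in> e \<and> u \<notin> e \<and> v \<notin> e"
  proof
    fix e assume e: "e \<in> W"
    have "u \<notin> e" using e assms(10) np[of e u w] uw unfolding W_def by auto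
    thus "w \<in> e \<and> u \<notin> e \<and> v \<notin> e" using e unfolding W_def by auto
  qed
  have hsU: "\<forall>e\<in>?\<sigma> ` U. v \<in> e \<and> u \<notin> e \<and> w \<notin> e"
  proof
    fix e assume "e \<in> ?\<sigma> ` U"
    then obtain d where d: "d \<in> U" "e = sw u v ` d" by blast
    show "v \<in> e \<and> u \<notin> e \<and> w \<notin> e" using hU d uw vw by (simp add: sw_edge_props)
  qed
  have htU: "\<forall>e\<in>?\<tau> ` U. w \<in> e \<and> u \<notin> e \<and> v \<notin> e"
  proof
    fix e assume "e \<in> ?\<tau> ` U"
    then obtain d where d: "d \<in> U" "e = sw u w ` d" by blast
    show "w \<in> e \<and> u \<notin> e \<and> v \<notin> e" using hU d uv vw by (simp add: sw_edge_props)
  qed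
  have hrW: "\<forall>e\<in>?\<rho> ` W. v \<in> e \<and> u \<notin> e \<and> w \<notin> e"
  proof
    fix e assume "e \<in> ?\<rho> ` W"
    then obtain d where d: "d \<in> W" "e = sw v w ` d" by blast
    show "v \<in> e \<and> u \<notin> e \<and> w \<notin> e" using hW d uv uw by (simp add: sw_edge_props)
  qed
  have fin: "finite Hs" "finite U" "finite V" "finite W" "finite (?\<sigma> ` U)" "finite (?\<tau> ` U)" "finite (?\<rho> ` W)"
    using fE unfolding Hs_def U_def V_def W_def by auto
  have hH_uv: "\<forall>e\<in>Hs. u \<notin> e \<and> v \<notin> e" and hH_uw: "\<forall>e\<in>Hs. u \<notin> e \<and> w \<notin> e"
    and hH_vw: "\<forall>e\<in>Hs. v \<notin> e \<and> w \<notin> e" using hH by auto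
  define a where "a \<psi> = card (extc r k \<phi> Hs U \<psi>)" for \<psi>
  define b where "b \<psi> = card (extc r k \<phi> Hs V \<psi>)" for \<psi>
  define c where "c \<psi> = card (extc r k \<phi> Hs W \<psi>)" for \<psi>
  have ra: "card (extc r k \<phi> Hs (?\<sigma> ` U) \<psi>) = a \<psi>" for \<psi>
    unfolding a_def by (rule extc_relabel[OF hH_uv fin(2)])
  have ra': "card (extc r k \<phi> Hs (?\<tau> ` U) \<psi>) = a \<psi>" for \<psi>
    unfolding a_def by (rule extc_relabel[OF hH_uw fin(2)])
  have rc: "card (extc r k \<phi> Hs (?\<rho> ` W) \<psi>) = c \<psi>" for \<psi>
    unfolding c_def by (rule extc_relabel[OF hH_vw fin(4)])
  let ?A = "free_colorings Hs r k \<phi>"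
  have cG1: "num_free (Hs \<union> U \<union> ?\<sigma> ` U \<union> W) r k \<phi> = (\<Sum>\<psi>\<in>?A. a \<psi> * a \<psi> * c \<psi>)"
    using C3v[OF uv uw vw hH hU hsU hW fin(1,2,5,4)] ra unfolding a_def c_def by simp
  have cG2: "num_free (Hs \<union> U \<union> ?\<sigma> ` U \<union> ?\<tau> ` U) r k \<phi> = (\<Sum>\<psi>\<in>?A. a \<psi> * a \<psi> * a \<psi>)"
    using C3v[OF uv uw vw hH hU hsU htU fin(1,2,5,6)] ra ra' unfolding a_def by simp
  have cG3: "num_free (Hs \<union> U \<union> ?\<rho> ` W \<union> W) r k \<phi> = (\<Sum>\<psi>\<in>?A. a \<psi> * c \<psi> * c \<psi>)"
    using C3v[OF uv uw vw hH hU hrW hW fin(1,2,7,4)] rc unfolding a_def c_def by simp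
  have cGm: "num_free (Hs \<union> U \<union> V \<union> W) r k \<phi> = (\<Sum>\<psi>\<in>?A. a \<psi> * b \<psi> * c \<psi>)"
    using C3v[OF uv uw vw hH hU hV hW fin(1,2,3,4)] unfolding a_def b_def c_def by simp
  have cG1w: "num_free (Hs \<union> U \<union> V \<union> ?\<tau> ` U) r k \<phi> = (\<Sum>\<psi>\<in>?A. a \<psi> * b \<psi> * a \<psi>)"
    using C3v[OF uv uw vw hH hU hV htU fin(1,2,3,6)] ra' unfolding a_def b_def by simp
  have L1: "extremal r k \<phi> n (Hs \<union> U \<union> ?\<sigma> ` U \<union> W)"
  proof -
    have "{e\<in>E. u \<notin> e \<and> v \<notin> e} \<union> {e\<in>E. u \<in> e} \<union> ?\<sigma> ` {e\<in>E. u \<in> e} = Hs \<union> U \<union> ?\<sigma> ` U \<union> W"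
      unfolding Hs_def U_def W_def by auto
    thus ?thesis using L[OF ex assms(6,7) uv assms(9)] by simp
  qed
  have L2: "extremal r k \<phi> n (Hs \<union> U \<union> V \<union> ?\<tau> ` U)"
  proof -
    have "{e\<in>E. u \<notin> e \<and> w \<notin> e} \<union> {e\<in>E. u \<in> e} \<union> ?\<tau> ` {e\<in>E. u \<in> e} = Hs \<union> U \<union> V \<union> ?\<tau> ` U"
      unfolding Hs_def U_def V_def by auto
    thus ?thesis using L[OF ex assms(6,8) uw assms(10)] by simp
  qed
  have gs: "graph_on n (?\<sigma> ` E)" "graph_on n (?\<tau> ` E)" "graph_on n (?\<rho> ` E)"
    using img_graph[OF g] assms(6,7,8) by auto
  have sub: "Hs \<subseteq> E" "U \<subseteq> E" "V \<subseteq> E" "W \<subseteq> E" "?\<sigma> ` U \<subseteq> ?\<sigma> ` E" "?\<tau> ` U \<subseteq> ?\<tau> ` E" "?\<rho> ` W \<subseteq> ?\<rho> ` E"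
    unfolding Hs_def U_def V_def W_def by auto
  have g2: "graph_on n (Hs \<union> U \<union> ?\<sigma> ` U \<union> ?\<tau> ` U)"
    unfolding graph_on_Un using graph_on_sub[OF g sub(1)] graph_on_sub[OF g sub(2)]
      graph_on_sub[OF gs(1) sub(5)] graph_on_sub[OF gs(2) sub(6)] by simp
  have g3: "graph_on n (Hs \<union> U \<union> ?\<rho> ` W \<union> W)"
    unfolding graph_on_Un using graph_on_sub[OF g sub(1)] graph_on_sub[OF g sub(2)]
      graph_on_sub[OF gs(3) sub(7)] graph_on_sub[OF g sub(4)] by simp
  have e1: "(\<Sum>\<psi>\<in>?A. a \<psi> * a \<psi> * c \<psi>) = max_free r k \<phi> n"
    using L1 cG1 unfolding extremal_def by simp
  have e2: "(\<Sum>\<psi>\<in>?A. a \<psi> * b \<psi> * a \<psi>) = max_free r k \<phi> n"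
    using L2 cG1w unfolding extremal_def by simp
  have ac: "\<forall>\<psi>\<in>?A. a \<psi> = 0 \<or> a \<psi> = c \<psi>"
  proof (rule cube_arith[OF free_finite[OF fin(1)]])
    show "(\<Sum>\<psi>\<in>?A. a \<psi> * a \<psi> * a \<psi>) \<le> max_free r k \<phi> n"
      using num_free_le[OF g2, of r k \<phi>] cG2 by simp
    show "(\<Sum>\<psi>\<in>?A. a \<psi> * c \<psi> * c \<psi>) \<le> max_free r k \<phi> n"
      using num_free_le[OF g3, of r k \<phi>] cG3 by simp
    show "(\<Sum>\<psi>\<in>?A. a \<psi> * a \<psi> * c \<psi>) = max_free r k \<phi> n" by (rule e1)
  qed
  have "(\<Sum>\<psi>\<in>?A. a \<psi> * b \<psi> * c \<psi>) = (\<Sum>\<psi>\<in>?A. a \<psi> * b \<psi> * a \<psi>)"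
  proof (rule sum.cong[OF refl])
    fix \<psi> assume "\<psi> \<in> ?A"
    thus "a \<psi> * b \<psi> * c \<psi> = a \<psi> * b \<psi> * a \<psi>" using ac by auto
  qed
  hence nm: "num_free (Hs \<union> U \<union> V \<union> W) r k \<phi> = max_free r k \<phi> n" using cGm e2 by simp
  have EE: "E - {{v, w}} = Hs \<union> U \<union> V \<union> W"
  proof
    show "E - {{v, w}} \<subseteq> Hs \<union> U \<union> V \<union> W"
    proof
      fix e assume e: "e \<in> E - {{v, w}}"
      have "\<not> (v \<in> e \<and> w \<in> e)" using e np[of e v w] vw by auto
      thus "e \<in> Hs \<union> U \<union> V \<union> W" using e unfolding Hs_def U_def V_def W_def by auto
    qed
    show "Hs \<union> U \<union> V \<union> W \<subseteq> E - {{v, w}}"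
      using sub(1-4) hH hU hV hW by auto
  qed
  have "graph_on n (E - {{v, w}})" using graph_on_sub[OF g] by blast
  thus ?thesis unfolding extremal_def EE using nm by simp
qed

end
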